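(* Define $\rho:M\times M\to[1,\infty)$ by $$\rho\big((y,x),(y',x')\big)=1+|y-y'|+2\inf\Big\{t\ge0:\ \sum_{i=1}^de^{-2\lambda_i(t+\max(y,y'))}(x_i-x_i')^2\le1\Big\}.$$ Then there exists $C_\rho>0$ such that $\mathrm{dist}(p,q)\le\rho(p,q)\le\mathrm{dist}(p,q)+C_\rho$ for all $p,q\in M$.
   Context: Let $d\ge1$, $0<\lambda_1\le\cdots\le\lambda_d$, and $M$ be $\mathbb{R}^{d+1}$ with coordinates $(y,x)=(y,x_1,\dots,x_d)$ and metric $g=dy^2+\sum_{i=1}^d e^{-2\lambda_i y}dx_i^2$; $\mathrm{dist}$ is its Riemannian distance. *)

theory Defs
  imports "HOL-Analysis.Analysis"
begin

text \<open>Points of M = R^(d+1) are pairs (y, x) with y real and x in real^'n,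
  where the finite type 'n indexes the coordinates x_1..x_d (so d = CARD('n) >= 1).
  lam i is the exponent lambda_i.\<close>

definition speed :: "('n::finite \<Rightarrow> real) \<Rightarrow> (real \<times> (real^'n)) \<Rightarrow> (real \<times> (real^'n)) \<Rightarrow> real" where
  "speed lam p v = sqrt ((fst v)\<^sup>2 + (\<Sum>i\<in>UNIV. exp (-2 * lam i * fst p) * ((snd v) $ i)\<^sup>2))"

definition has_riem_length ::
  "('n::finite \<Rightarrow> real) \<Rightarrow> (real \<Rightarrow> (real \<times> (real^'n))) \<Rightarrow> real \<Rightarrow> bool" where
  "has_riem_length lam \<gamma> L \<longleftrightarrow>
     \<gamma> piecewise_C1_differentiable_on {0..1} \<and>
     ((\<lambda>t. speed lam (\<gamma> t) (vector_derivative \<gamma> (at t))) has_integral L) {0..1}"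

definition riem_dist :: "('n::finite \<Rightarrow> real) \<Rightarrow> (real \<times> (real^'n)) \<Rightarrow> (real \<times> (real^'n)) \<Rightarrow> real" where
  "riem_dist lam p q = Inf {L. \<exists>\<gamma>. \<gamma> 0 = p \<and> \<gamma> 1 = q \<and> has_riem_length lam \<gamma> L}"

definition rho :: "('n::finite \<Rightarrow> real) \<Rightarrow> (real \<times> (real^'n)) \<Rightarrow> (real \<times> (real^'n)) \<Rightarrow> real" where
  "rho lam p q = 1 + \<bar>fst p - fst q\<bar> + 2 * Inf {t. t \<ge> 0 \<and>
      (\<Sum>i\<in>UNIV. exp (-2 * lam i * (t + max (fst p) (fst q))) * ((snd p) $ i - (snd q) $ i)\<^sup>2) \<le> 1}"

end

theory Submission
  imports Defs
begin



lemma vd_fst: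
  assumes "(g has_vector_derivative v) (at x)"
  shows "((\<lambda>s. fst (g s :: real \<times> (real^'n))) has_real_derivative fst v) (at x)"
proof -
  have "((\<lambda>s. fst (g s)) has_derivative (\<lambda>h. fst (h *\<^sub>R v))) (at x)"
    using assms unfolding has_vector_derivative_def
    by (rule bounded_linear.has_derivative[OF bounded_linear_fst])
  then show ?thesis unfolding has_field_derivative_def
    by (rule has_derivative_eq_rhs) (auto simp: mult.commute)
qed
lemma vd_snd:
  assumes "(g has_vector_derivative v) (at x)"
  shows "((\<lambda>s. snd (g s :: real \<times> (real^'n)) $ j) has_real_derivative snd v $ j) (at x)"
proof -
  have "((\<lambda>s. snd (g s) $ j) has_derivative (\<lambda>h. snd (h *\<^sub>R v) $ j)) (at x)"
    using assms unfolding has_vector_derivative_def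
    by (rule bounded_linear.has_derivative[OF bounded_linear_vec_nth
          bounded_linear.has_derivative[OF bounded_linear_snd]])
  then show ?thesis unfolding has_field_derivative_def
    by (rule has_derivative_eq_rhs) (auto simp: mult.commute)
qed

definition Wf :: "real \<Rightarrow> real \<Rightarrow> real \<Rightarrow> real \<Rightarrow> real \<Rightarrow> real" where
 "Wf l y0 x0 y x = (exp(l*y)/exp(l*y0) + exp(l*y0)/exp(l*y))/2 + l^2*(x-x0)^2/(2*exp(l*y)*exp(l*y0))"
definition Wy :: "real \<Rightarrow> real \<Rightarrow> real \<Rightarrow> real \<Rightarrow> real \<Rightarrow> real" where
 "Wy l y0 x0 y x = l*((exp(l*y)/exp(l*y0) - exp(l*y0)/exp(l*y))/2 - l^2*(x-x0)^2/(2*exp(l*y)*exp(l*y0)))"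
definition Wx :: "real \<Rightarrow> real \<Rightarrow> real \<Rightarrow> real \<Rightarrow> real \<Rightarrow> real" where
 "Wx l y0 x0 y x = l^2*(x-x0)/(exp(l*y)*exp(l*y0))"

lemma Wf_deriv:
  assumes "(Y has_real_derivative a) (at s)" "(X has_real_derivative b) (at s)"
  shows "((\<lambda>s. Wf l y0 x0 (Y s) (X s)) has_real_derivative
      (Wy l y0 x0 (Y s) (X s) * a + Wx l y0 x0 (Y s) (X s) * b)) (at s)"
  unfolding Wf_def Wy_def Wx_def
  apply (rule derivative_eq_intros assms refl | simp)+
  apply (simp add: field_simps power2_eq_square)
  done

lemma Wf_pos: "Wf l y0 x0 y x > 0"
  unfolding Wf_def by (intro add_pos_nonneg) (auto intro: divide_nonneg_pos add_pos_pos)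

lemma Wf_ident:
  "(Wy l y0 x0 y x)^2 + (Wx l y0 x0 y x)^2 * exp(l*y)^2 = l^2 * ((Wf l y0 x0 y x)^2 - 1)"
  unfolding Wf_def Wy_def Wx_def
  by (simp add: field_simps power2_eq_square)

lemma cs2: fixes p q a b E :: real assumes "E > 0"
  shows "(p*a + q*b)^2 \<le> (p^2 + q^2/E) * (a^2 + E*b^2)"
proof -
  have "(p^2 + q^2/E) * (a^2 + E*b^2) - (p*a + q*b)^2 = (p*E*b - q*a)^2 / E"
    using assms by (simp add: field_simps power2_eq_square)
  also have "\<dots> \<ge> 0" using assms by simp
  finally show ?thesis by simp
qed

lemma Wf_bound:
  assumes "l > 0"
  shows "\<bar>Wy l y0 x0 y x * a + Wx l y0 x0 y x * b\<bar> \<le> l * Wf l y0 x0 y x * sqrt (a^2 + exp(-2*l*y)*b^2)"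
proof -
  let ?E = "exp(-2*l*y)"
  have E: "?E > 0" by simp
  have e0: "exp(l*y)^2 * ?E = 1" by (simp add: power2_eq_square exp_add[symmetric])
  have e: "1/?E = exp(l*y)^2" using e0 E by (simp add: field_simps)
  have "(Wy l y0 x0 y x * a + Wx l y0 x0 y x * b)^2 \<le> ((Wy l y0 x0 y x)^2 + (Wx l y0 x0 y x)^2/?E) * (a^2 + ?E*b^2)"
    by (rule cs2[OF E])
  also have "(Wy l y0 x0 y x)^2 + (Wx l y0 x0 y x)^2/?E = l^2 * ((Wf l y0 x0 y x)^2 - 1)"
    using Wf_ident[of l y0 x0 y x] e by (simp add: divide_inverse)
  also have "\<dots> * (a^2 + ?E*b^2) \<le> (l * Wf l y0 x0 y x)^2 * (a^2 + ?E*b^2)"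
  proof (rule mult_right_mono)
    show "l\<^sup>2 * ((Wf l y0 x0 y x)\<^sup>2 - 1) \<le> (l * Wf l y0 x0 y x)\<^sup>2"
      by (simp add: power_mult_distrib right_diff_distrib)
    show "0 \<le> a^2 + ?E*b^2" by (intro add_nonneg_nonneg mult_nonneg_nonneg) auto
  qed
  also have "\<dots> = (l * Wf l y0 x0 y x * sqrt (a^2 + ?E*b^2))^2"
  proof -
    have "0 \<le> a^2 + ?E*b^2" by (intro add_nonneg_nonneg mult_nonneg_nonneg) auto
    then show ?thesis by (simp add: power_mult_distrib)
  qed
  finally have "\<bar>Wy l y0 x0 y x * a + Wx l y0 x0 y x * b\<bar>^2 \<le> (l * Wf l y0 x0 y x * sqrt (a^2 + ?E*b^2))^2"
    by (simp only: power2_abs)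
  moreover have "0 \<le> l * Wf l y0 x0 y x * sqrt (a^2 + ?E*b^2)"
    using assms Wf_pos[of l y0 x0 y x] by simp
  ultimately show ?thesis by (rule power2_le_imp_le)
qed


lemma curve_lower:
  fixes lam :: "'n::finite \<Rightarrow> real"
  assumes lpos: "lam j > 0" and hl: "has_riem_length lam \<gamma> L" and g0: "\<gamma> 0 = p" and g1: "\<gamma> 1 = q"
  shows "ln (Wf (lam j) (fst p) (snd p $ j) (fst q) (snd q $ j)) / lam j \<le> L"
proof -
  let ?l = "lam j" and ?y0 = "fst p" and ?x0 = "snd p $ j"
  from hl obtain S where cont: "continuous_on {0..1} \<gamma>" and fin: "finite S"
      and c1: "\<gamma> C1_differentiable_on {0..1} - S"
      and int: "((\<lambda>t. speed lam (\<gamma> t) (vector_derivative \<gamma> (at t))) has_integral L) {0..1}"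
    unfolding has_riem_length_def piecewise_C1_differentiable_on_def by blast
  from c1 obtain D where der: "\<And>x. x \<in> {0..1} - S \<Longrightarrow> (\<gamma> has_vector_derivative D x) (at x)"
    unfolding C1_differentiable_on_def by blast
  define g where "g s = ln (Wf ?l ?y0 ?x0 (fst (\<gamma> s)) (snd (\<gamma> s) $ j)) / ?l" for s
  define g' where "g' s = (if s \<in> {0<..<1} - S then
      (Wy ?l ?y0 ?x0 (fst (\<gamma> s)) (snd (\<gamma> s) $ j) * fst (D s) + Wx ?l ?y0 ?x0 (fst (\<gamma> s)) (snd (\<gamma> s) $ j) * (snd (D s) $ j))
         / (Wf ?l ?y0 ?x0 (fst (\<gamma> s)) (snd (\<gamma> s) $ j) * ?l)
      else speed lam (\<gamma> s) (vector_derivative \<gamma> (at s)))" for s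
  have "(g' has_integral (g 1 - g 0)) {0..1}"
  proof (rule fundamental_theorem_of_calculus_interior_strong[OF fin])
    show "continuous_on {0..1} g"
    proof -
      have cW: "continuous_on {0..1} (\<lambda>s. Wf ?l ?y0 ?x0 (fst (\<gamma> s)) (snd (\<gamma> s) $ j))"
        unfolding Wf_def by (intro continuous_intros cont) auto
      show ?thesis unfolding g_def
        by (intro continuous_intros cW) (use lpos in \<open>simp_all add: less_imp_neq[symmetric] Wf_pos\<close>)
    qed
  next
    fix x assume x: "x \<in> {0<..<1} - S"
    then have dx: "(\<gamma> has_vector_derivative D x) (at x)" by (intro der) auto
    have "((\<lambda>s. Wf ?l ?y0 ?x0 (fst (\<gamma> s)) (snd (\<gamma> s) $ j)) has_real_derivative
      (Wy ?l ?y0 ?x0 (fst (\<gamma> x)) (snd (\<gamma> x) $ j) * fst (D x) + Wx ?l ?y0 ?x0 (fst (\<gamma> x)) (snd (\<gamma> x) $ j) * (snd (D x) $ j))) (at x)"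
      by (rule Wf_deriv[OF vd_fst[OF dx] vd_snd[OF dx]])
    from DERIV_chain2[OF DERIV_ln_divide this, OF Wf_pos]
    have "(g has_real_derivative (1 / Wf ?l ?y0 ?x0 (fst (\<gamma> x)) (snd (\<gamma> x) $ j) *
      (Wy ?l ?y0 ?x0 (fst (\<gamma> x)) (snd (\<gamma> x) $ j) * fst (D x) + Wx ?l ?y0 ?x0 (fst (\<gamma> x)) (snd (\<gamma> x) $ j) * (snd (D x) $ j))) / ?l) (at x)"
      unfolding g_def by (rule DERIV_cdivide)
    then have "(g has_real_derivative g' x) (at x)"
      unfolding g'_def using x by (simp add: divide_divide_eq_left)
    then show "(g has_vector_derivative g' x) (at x)"
      by (simp add: has_real_derivative_iff_has_vector_derivative)
  qed simp
  note I1 = this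
  have le: "g' x \<le> speed lam (\<gamma> x) (vector_derivative \<gamma> (at x))" if "x \<in> {0..1}" for x
  proof (cases "x \<in> {0<..<1} - S")
    case True
    then have dx: "(\<gamma> has_vector_derivative D x) (at x)" by (intro der) auto
    have vd: "vector_derivative \<gamma> (at x) = D x" by (rule vector_derivative_at[OF dx])
    let ?W = "Wf ?l ?y0 ?x0 (fst (\<gamma> x)) (snd (\<gamma> x) $ j)"
    have Wp: "?W > 0" by (rule Wf_pos)
    have "Wy ?l ?y0 ?x0 (fst (\<gamma> x)) (snd (\<gamma> x) $ j) * fst (D x) + Wx ?l ?y0 ?x0 (fst (\<gamma> x)) (snd (\<gamma> x) $ j) * (snd (D x) $ j)
        \<le> ?l * ?W * sqrt ((fst (D x))^2 + exp(-2 * ?l * fst (\<gamma> x)) * (snd (D x) $ j)^2)"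
      using Wf_bound[OF lpos] abs_le_D1 by blast
    also have "sqrt ((fst (D x))^2 + exp(-2 * ?l * fst (\<gamma> x)) * (snd (D x) $ j)^2) \<le> speed lam (\<gamma> x) (D x)"
      unfolding speed_def
    proof (rule real_sqrt_le_mono, rule add_left_mono)
      show "exp (- 2 * lam j * fst (\<gamma> x)) * (snd (D x) $ j)\<^sup>2
          \<le> (\<Sum>i\<in>UNIV. exp (- 2 * lam i * fst (\<gamma> x)) * (snd (D x) $ i)\<^sup>2)"
        by (rule member_le_sum[where f = "\<lambda>i. exp (- 2 * lam i * fst (\<gamma> x)) * (snd (D x) $ i)\<^sup>2"]) auto
    qed
    then have "?l * ?W * sqrt ((fst (D x))^2 + exp(-2 * ?l * fst (\<gamma> x)) * (snd (D x) $ j)^2) \<le> ?l * ?W * speed lam (\<gamma> x) (D x)"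
      using lpos Wp by (intro mult_left_mono) auto
    finally show ?thesis using True Wp lpos unfolding g'_def vd
      by (simp add: divide_le_eq mult.commute mult.left_commute)
  next
    case False
    then show ?thesis unfolding g'_def by (simp only: if_False)
  qed
  have "g 1 - g 0 \<le> L" using I1 int le by (rule has_integral_le)
  moreover have "g 0 = 0" unfolding g_def g0 Wf_def by simp
  ultimately show ?thesis unfolding g_def g1 by simp
qed



lemma lp_deriv:
  "((\<lambda>u. linepath a b (c*u + k)) has_vector_derivative c *\<^sub>R (b - a)) (at x)"
  unfolding linepath_def has_vector_derivative_def
  by (rule derivative_eq_intros refl | simp)+ (simp add: algebra_simps)

lemma const_piece:
  fixes a b :: real
  assumes "a \<le> b" "\<And>s. s \<in> {a<..<b} \<Longrightarrow> f s = c"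
  shows "(f has_integral (c * (b - a))) {a..b}"
proof (rule has_integral_spike_finite[of "{a,b}"])
  show "((\<lambda>s. c) has_integral c * (b - a)) {a..b}"
    using has_integral_const_real[of c a b] assms by (simp add: mult.commute)
qed (use assms in auto)

lemma curve_upper:
  fixes lam :: "'n::finite \<Rightarrow> real" and p q :: "real \<times> (real^'n)"
  assumes t: "t \<ge> 0"
    and hs: "(\<Sum>i\<in>UNIV. exp (-2 * lam i * (t + max (fst p) (fst q))) * ((snd p) $ i - (snd q) $ i)\<^sup>2) \<le> 1"
  shows "\<exists>\<gamma> L. \<gamma> 0 = p \<and> \<gamma> 1 = q \<and> has_riem_length lam \<gamma> L \<and> L \<le> 1 + \<bar>fst p - fst q\<bar> + 2 * t"
proof -
  define H where "H = t + max (fst p) (fst q)"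
  define p1 where "p1 = (H, snd p)"
  define p2 where "p2 = (H, snd q)"
  define N where "N = sqrt (\<Sum>i\<in>UNIV. exp (-2 * lam i * H) * ((snd p) $ i - (snd q) $ i)\<^sup>2)"
  define \<gamma> where "\<gamma> = linepath p p1 +++ (linepath p1 p2 +++ linepath p2 q)"
  have N1: "N \<le> 1" unfolding N_def using hs H_def by simp
  have Hy: "H \<ge> fst p" "H \<ge> fst q" using t unfolding H_def by auto
  have vp: "valid_path \<gamma>" unfolding \<gamma>_def
    by (intro valid_path_join valid_path_linepath) (auto simp: p1_def p2_def)
  have e0: "\<gamma> 0 = p" and e1: "\<gamma> 1 = q"
    unfolding \<gamma>_def by (auto simp: joinpaths_def linepath_def)
  define f where "f t = speed lam (\<gamma> t) (vector_derivative \<gamma> (at t))" for t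
  have A: "f s = 2 * (H - fst p)" if "s \<in> {0<..<1/2}" for s
  proof -
    have "((\<lambda>u. linepath p p1 (2*u + 0)) has_vector_derivative 2 *\<^sub>R (p1 - p)) (at s)"
      by (rule lp_deriv)
    then have "(\<gamma> has_vector_derivative 2 *\<^sub>R (p1 - p)) (at s)"
      by (rule has_vector_derivative_transform_within_open[where S="{..<1/2}"])
         (use that in \<open>auto simp: \<gamma>_def joinpaths_def\<close>)
    then have "vector_derivative \<gamma> (at s) = 2 *\<^sub>R (p1 - p)" by (rule vector_derivative_at)
    then show ?thesis unfolding f_def speed_def using Hy by (simp add: p1_def)
  qed
  have B: "f s = 4 * N" if "s \<in> {1/2<..<3/4}" for s
  proof -
    have "((\<lambda>u. linepath p1 p2 (4*u + -2)) has_vector_derivative 4 *\<^sub>R (p2 - p1)) (at s)"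
      by (rule lp_deriv)
    then have d: "(\<gamma> has_vector_derivative 4 *\<^sub>R (p2 - p1)) (at s)"
      by (rule has_vector_derivative_transform_within_open[where S="{1/2<..<3/4}"])
         (use that in \<open>auto simp: \<gamma>_def joinpaths_def algebra_simps\<close>)
    have g: "fst (\<gamma> s) = H" using that
      by (auto simp: \<gamma>_def joinpaths_def linepath_def p1_def p2_def algebra_simps)
    have "(\<Sum>i\<in>UNIV. exp (- 2 * lam i * H) * (4 * (snd q $ i - snd p $ i))\<^sup>2)
        = 4^2 * (\<Sum>i\<in>UNIV. exp (- 2 * lam i * H) * (snd p $ i - snd q $ i)\<^sup>2)"
      by (simp add: sum_distrib_left power2_eq_square algebra_simps)
    then show ?thesis unfolding f_def speed_def vector_derivative_at[OF d] g N_def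
      by (simp add: p1_def p2_def real_sqrt_mult)
  qed
  have C: "f s = 4 * (H - fst q)" if "s \<in> {3/4<..<1}" for s
  proof -
    have "((\<lambda>u. linepath p2 q (4*u + -3)) has_vector_derivative 4 *\<^sub>R (q - p2)) (at s)"
      by (rule lp_deriv)
    then have "(\<gamma> has_vector_derivative 4 *\<^sub>R (q - p2)) (at s)"
      by (rule has_vector_derivative_transform_within_open[where S="{3/4<..}"])
         (use that in \<open>auto simp: \<gamma>_def joinpaths_def algebra_simps\<close>)
    then have "vector_derivative \<gamma> (at s) = 4 *\<^sub>R (q - p2)" by (rule vector_derivative_at)
    then show ?thesis unfolding f_def speed_def using Hy by (simp add: p2_def)
  qed
  have i1: "(f has_integral (2 * (H - fst p) * (1/2 - 0))) {0..1/2}"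
    by (rule const_piece) (use A in auto)
  have i2: "(f has_integral (4 * N * (3/4 - 1/2))) {1/2..3/4}"
    by (rule const_piece) (use B in auto)
  have i3: "(f has_integral (4 * (H - fst q) * (1 - 3/4))) {3/4..1}"
    by (rule const_piece) (use C in auto)
  have "(f has_integral (2 * (H - fst p) * (1/2 - 0) + (4 * N * (3/4 - 1/2) + 4 * (H - fst q) * (1 - 3/4)))) {0..1}"
    by (rule has_integral_combine[OF _ _ i1 has_integral_combine[OF _ _ i2 i3]]) auto
  then have "has_riem_length lam \<gamma> ((H - fst p) + N + (H - fst q))"
    using vp unfolding has_riem_length_def valid_path_def f_def by (simp add: algebra_simps)
  moreover have "(H - fst p) + N + (H - fst q) \<le> 1 + \<bar>fst p - fst q\<bar> + 2 * t"
    using N1 unfolding H_def by (auto simp: max_def)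
  ultimately show ?thesis using e0 e1 by blast
qed


definition Cst :: "('n::finite \<Rightarrow> real) \<Rightarrow> real" where
  "Cst lam = 1 + (\<Sum>j\<in>UNIV. (\<bar>ln (lam j ^ 2 / (2 * real CARD('n)))\<bar> + ln 2) / lam j)"

lemma Cst_ge:
  fixes lam :: "'n::finite \<Rightarrow> real"
  assumes lpos: "\<And>i. lam i > 0"
  shows "1 + (\<bar>ln (lam j ^ 2 / (2 * real CARD('n)))\<bar> + ln 2) / lam j \<le> Cst lam"
proof -
  have "(\<bar>ln (lam j ^ 2 / (2 * real CARD('n)))\<bar> + ln 2) / lam j
     \<le> (\<Sum>j\<in>UNIV. (\<bar>ln (lam j ^ 2 / (2 * real CARD('n)))\<bar> + ln 2) / lam j)"
    by (rule member_le_sum) (use lpos in \<open>auto intro!: divide_nonneg_pos\<close>)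
  then show ?thesis unfolding Cst_def by simp
qed

lemma key:
  fixes lam :: "'n::finite \<Rightarrow> real" and p q :: "real \<times> (real^'n)"
  assumes lpos: "\<And>i. lam i > 0"
  defines "T \<equiv> {t. t \<ge> 0 \<and> (\<Sum>i\<in>UNIV. exp (-2 * lam i * (t + max (fst p) (fst q))) * ((snd p) $ i - (snd q) $ i)\<^sup>2) \<le> 1}"
  shows "\<exists>t0\<in>T. \<forall>\<gamma> L. \<gamma> 0 = p \<longrightarrow> \<gamma> 1 = q \<longrightarrow> has_riem_length lam \<gamma> L \<longrightarrow> rho lam p q \<le> L + Cst lam"
proof -
  define d where "d = real CARD('n)"
  have "CARD('n) > 0" by simp
  then have d1: "d \<ge> 1" unfolding d_def by linarith
  define M0 where "M0 = max (fst p) (fst q)"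
  define \<Delta> where "\<Delta> i = snd p $ i - snd q $ i" for i
  define \<tau> where "\<tau> i = (if d * (\<Delta> i)^2 * exp (-2 * lam i * M0) \<le> 1 then 0 else ln (d * (\<Delta> i)^2) / (2 * lam i) - M0)" for i
  define t0 where "t0 = Max (range \<tau>)"
  have \<tau>0: "\<tau> i \<ge> 0" for i
  proof (cases "d * (\<Delta> i)^2 * exp (-2 * lam i * M0) \<le> 1")
    case False
    then have pos: "d * (\<Delta> i)^2 > 0" using d1
      by (metis mult_eq_0_iff mult_pos_pos not_less_iff_gr_or_eq zero_le_power2 exp_gt_zero
          linorder_not_le mult_nonneg_nonneg order.trans zero_le_one)
    have "exp (ln (d * (\<Delta> i)^2)) * exp (-2 * lam i * M0) > 1" using False pos by simp
    then have "exp (ln (d * (\<Delta> i)^2) + (-2 * lam i * M0)) > 1" by (simp only: exp_add)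
    then have "ln (d * (\<Delta> i)^2) + (-2 * lam i * M0) > 0" by (metis exp_zero exp_less_cancel_iff)
    then have "ln (d * (\<Delta> i)^2) - 2 * lam i * M0 > 0" by simp
    then have "ln (d * (\<Delta> i)^2) / (2 * lam i) - M0 > 0" using lpos[of i]
      by (simp add: field_simps)
    then show ?thesis using False unfolding \<tau>_def by simp
  qed (simp add: \<tau>_def)
  have t0ge: "t0 \<ge> \<tau> i" for i unfolding t0_def by (rule Max_ge) auto
  have t00: "t0 \<ge> 0" using t0ge[of undefined] \<tau>0[of undefined] by linarith
  have trm: "exp (-2 * lam i * (t0 + M0)) * (\<Delta> i)^2 \<le> 1 / d" for i
  proof (cases "d * (\<Delta> i)^2 * exp (-2 * lam i * M0) \<le> 1")
    case True
    have "exp (-2 * lam i * (t0 + M0)) \<le> exp (-2 * lam i * M0)"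
      using t00 lpos[of i] by (simp add: mult_nonneg_nonneg)
    then have "exp (-2 * lam i * (t0 + M0)) * (\<Delta> i)^2 \<le> exp (-2 * lam i * M0) * (\<Delta> i)^2"
      by (rule mult_right_mono) simp
    also have "\<dots> \<le> 1 / d" using True d1 by (simp add: field_simps)
    finally show ?thesis .
  next
    case False
    then have pos: "d * (\<Delta> i)^2 > 0" using d1
      by (metis mult_eq_0_iff mult_pos_pos not_less_iff_gr_or_eq zero_le_power2 exp_gt_zero
          linorder_not_le mult_nonneg_nonneg order.trans zero_le_one)
    have "ln (d * (\<Delta> i)^2) / (2 * lam i) - M0 \<le> t0" using t0ge[of i] False unfolding \<tau>_def by simp
    then have "ln (d * (\<Delta> i)^2) \<le> 2 * lam i * (t0 + M0)" using lpos[of i]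
      by (simp add: field_simps)
    then have "d * (\<Delta> i)^2 \<le> exp (2 * lam i * (t0 + M0))"
      using pos by (metis exp_le_cancel_iff exp_ln)
    then have "d * (\<Delta> i)^2 * exp (-2 * lam i * (t0 + M0)) \<le> exp (2 * lam i * (t0 + M0)) * exp (-2 * lam i * (t0 + M0))"
      by (rule mult_right_mono) simp
    also have "exp (2 * lam i * (t0 + M0)) * exp (-2 * lam i * (t0 + M0)) = 1"
      by (simp add: exp_add[symmetric])
    finally have "d * ((\<Delta> i)^2 * exp (-2 * lam i * (t0 + M0))) \<le> 1"
      by (simp add: mult.assoc)
    then show ?thesis using d1 by (simp add: field_simps)
  qed
  have t0T: "t0 \<in> T"
  proof -
    have "(\<Sum>i\<in>UNIV. exp (-2 * lam i * (t0 + M0)) * (\<Delta> i)^2) \<le> real (card (UNIV::'n set)) * (1 / d)"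
      by (rule sum_bounded_above) (rule trm)
    also have "\<dots> = 1" using d1 unfolding d_def by simp
    finally show ?thesis unfolding T_def M0_def \<Delta>_def using t00 by simp
  qed
  have bdd: "bdd_below T" unfolding T_def by (rule bdd_belowI[of _ 0]) auto
  have InfT: "Inf T \<le> t0" by (rule cInf_lower[OF t0T bdd])
  have rho_le: "rho lam p q \<le> 1 + \<bar>fst p - fst q\<bar> + 2 * t0"
    unfolding rho_def using InfT T_def by simp
  have Dy: "2 * M0 - fst p - fst q = \<bar>fst p - fst q\<bar>" unfolding M0_def by (simp add: max_def)
  show ?thesis
  proof (intro bexI[OF _ t0T] allI impI)
    fix \<gamma> L assume g0: "\<gamma> 0 = p" and g1: "\<gamma> 1 = q" and hl: "has_riem_length lam \<gamma> L"
    show "rho lam p q \<le> L + Cst lam"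
    proof (cases "t0 = 0")
      case True
      define j :: 'n where "j = undefined"
      let ?W = "Wf (lam j) (fst p) (snd p $ j) (fst q) (snd q $ j)"
      have lw: "ln ?W / lam j \<le> L" by (rule curve_lower[OF lpos hl g0 g1])
      have W1: "exp (lam j * \<bar>fst p - fst q\<bar>) / 2 \<le> ?W"
      proof -
        have a: "exp (lam j * \<bar>fst p - fst q\<bar>) \<le> exp (lam j * fst q) / exp (lam j * fst p) + exp (lam j * fst p) / exp (lam j * fst q)"
        proof (cases "fst p \<le> fst q")
          case True
          then have "exp (lam j * \<bar>fst p - fst q\<bar>) = exp (lam j * fst q) / exp (lam j * fst p)"
            by (simp add: exp_diff[symmetric] right_diff_distrib)
          then show ?thesis by (simp add: add_increasing2)
        next
          case False
          then have "exp (lam j * \<bar>fst p - fst q\<bar>) = exp (lam j * fst p) / exp (lam j * fst q)"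
            by (simp add: exp_diff[symmetric] right_diff_distrib)
          then show ?thesis by (simp add: add_increasing)
        qed
        have nn: "0 \<le> (lam j)^2*(snd q $ j - snd p $ j)^2/(2*exp(lam j * fst q)*exp(lam j*fst p))" by simp
        have b: "exp (lam j * \<bar>fst p - fst q\<bar>) / 2 \<le> (exp (lam j * fst q) / exp (lam j * fst p) + exp (lam j * fst p) / exp (lam j * fst q)) / 2"
          using a by (rule divide_right_mono) simp
        show ?thesis unfolding Wf_def by (rule add_increasing2[OF nn b])
      qed
      have "ln (exp (lam j * \<bar>fst p - fst q\<bar>) / 2) \<le> ln ?W"
        using W1 by (subst ln_le_cancel_iff) (auto simp: Wf_pos)
      then have "lam j * \<bar>fst p - fst q\<bar> - ln 2 \<le> ln ?W" by (simp add: ln_div)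
      then have "(lam j * \<bar>fst p - fst q\<bar> - ln 2) / lam j \<le> ln ?W / lam j"
        using lpos[of j] by (intro divide_right_mono) auto
      also have "(lam j * \<bar>fst p - fst q\<bar> - ln 2) / lam j = \<bar>fst p - fst q\<bar> - ln 2 / lam j"
        using lpos[of j] by (simp add: diff_divide_distrib)
      finally have "\<bar>fst p - fst q\<bar> - ln 2 / lam j \<le> ln ?W / lam j" .
      moreover have "1 + (\<bar>ln (lam j ^ 2 / (2 * real CARD('n)))\<bar> + ln 2) / lam j \<le> Cst lam"
        by (rule Cst_ge[OF lpos])
      moreover have "ln 2 / lam j \<le> (\<bar>ln (lam j ^ 2 / (2 * real CARD('n)))\<bar> + ln 2) / lam j"
        using lpos[of j] by (simp add: divide_right_mono)
      ultimately show ?thesis using rho_le True lw by linarith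
    next
      case False
      have "t0 \<in> range \<tau>" unfolding t0_def by (rule Max_in) auto
      then obtain j where tj: "t0 = \<tau> j" by auto
      have nc: "\<not> d * (\<Delta> j)^2 * exp (-2 * lam j * M0) \<le> 1" using False tj unfolding \<tau>_def by auto
      then have tj2: "t0 = ln (d * (\<Delta> j)^2) / (2 * lam j) - M0" using tj unfolding \<tau>_def by simp
      have pos: "d * (\<Delta> j)^2 > 0" using nc d1
        by (metis mult_eq_0_iff mult_pos_pos not_less_iff_gr_or_eq zero_le_power2 exp_gt_zero
            linorder_not_le mult_nonneg_nonneg order.trans zero_le_one)
      then have Dpos: "(\<Delta> j)^2 > 0" using d1 by (simp add: zero_less_mult_iff)
      have lnD: "ln (d * (\<Delta> j)^2) = 2 * lam j * (t0 + M0)" using tj2 lpos[of j] by (simp add: field_simps)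
      let ?W = "Wf (lam j) (fst p) (snd p $ j) (fst q) (snd q $ j)"
      let ?X = "(lam j)^2 * (\<Delta> j)^2 / (2 * exp (lam j * fst q) * exp (lam j * fst p))"
      have lw: "ln ?W / lam j \<le> L" by (rule curve_lower[OF lpos hl g0 g1])
      have XW: "?X \<le> ?W" unfolding Wf_def \<Delta>_def
        by (simp add: power2_commute add_increasing)
      have Xpos: "?X > 0" using Dpos lpos[of j] by simp
      have e1: "ln ?X = 2 * ln (lam j) + ln ((\<Delta> j)^2) - ln 2 - lam j * fst q - lam j * fst p"
        using Dpos lpos[of j] by (simp add: ln_div ln_mult ln_realpow)
      have e2: "ln ((\<Delta> j)^2) = 2 * lam j * (t0 + M0) - ln d"
        using lnD Dpos d1 by (simp add: ln_mult)
      have e3: "ln (lam j ^ 2 / (2 * d)) = 2 * ln (lam j) - ln 2 - ln d"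
        using lpos[of j] d1 by (simp add: ln_div ln_mult ln_realpow)
      have e4: "lam j * \<bar>fst p - fst q\<bar> = 2 * lam j * M0 - lam j * fst p - lam j * fst q"
        by (simp add: Dy[symmetric] algebra_simps)
      have e5: "lam j * (2 * t0 + \<bar>fst p - fst q\<bar>) = 2 * lam j * t0 + lam j * \<bar>fst p - fst q\<bar>"
        by (simp add: algebra_simps)
      have e6: "2 * lam j * (t0 + M0) = 2 * lam j * t0 + 2 * lam j * M0"
        by (simp add: algebra_simps)
      have "ln ?X = ln (lam j ^ 2 / (2 * d)) + lam j * (2 * t0 + \<bar>fst p - fst q\<bar>)"
        using e1 e2 e3 e4 e5 e6 by linarith
      moreover have "ln ?X \<le> ln ?W" using XW Xpos by (subst ln_le_cancel_iff) (auto intro: less_le_trans)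
      ultimately have "(ln (lam j ^ 2 / (2 * d)) + lam j * (2 * t0 + \<bar>fst p - fst q\<bar>)) / lam j \<le> ln ?W / lam j"
        using lpos[of j] by (intro divide_right_mono) auto
      also have "(ln (lam j ^ 2 / (2 * d)) + lam j * (2 * t0 + \<bar>fst p - fst q\<bar>)) / lam j = ln (lam j ^ 2 / (2 * d)) / lam j + (2 * t0 + \<bar>fst p - fst q\<bar>)"
        using lpos[of j] by (simp add: add_divide_distrib)
      finally have "ln (lam j ^ 2 / (2 * d)) / lam j + (2 * t0 + \<bar>fst p - fst q\<bar>) \<le> ln ?W / lam j" .
      moreover have "1 + (\<bar>ln (lam j ^ 2 / (2 * real CARD('n)))\<bar> + ln 2) / lam j \<le> Cst lam"
        by (rule Cst_ge[OF lpos])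
      moreover have "- (ln (lam j ^ 2 / (2 * d)) / lam j) \<le> (\<bar>ln (lam j ^ 2 / (2 * real CARD('n)))\<bar> + ln 2) / lam j"
      proof -
        have "- ln (lam j ^ 2 / (2 * d)) \<le> \<bar>ln (lam j ^ 2 / (2 * real CARD('n)))\<bar> + ln 2"
          unfolding d_def by (simp add: add_increasing2)
        then have "(- ln (lam j ^ 2 / (2 * d))) / lam j \<le> (\<bar>ln (lam j ^ 2 / (2 * real CARD('n)))\<bar> + ln 2) / lam j"
          using lpos[of j] by (intro divide_right_mono) auto
        then show ?thesis by (simp only: minus_divide_left)
      qed
      ultimately show ?thesis using rho_le lw by linarith
    qed
  qed
qed

theorem mainTheorem8:
  fixes lam :: "'n::finite \<Rightarrow> real"
  assumes "\<And>i. lam i > 0"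
  shows "\<exists>C>0. \<forall>p q. riem_dist lam p q \<le> rho lam p q \<and> rho lam p q \<le> riem_dist lam p q + C"
proof (intro exI[of _ "Cst lam"] conjI allI)
  note lpos = assms
  define j0 :: 'n where "j0 = undefined"
  have "1 + (\<bar>ln (lam j0 ^ 2 / (2 * real CARD('n)))\<bar> + ln 2) / lam j0 \<le> Cst lam"
    by (rule Cst_ge[OF lpos])
  moreover have "0 \<le> (\<bar>ln (lam j0 ^ 2 / (2 * real CARD('n)))\<bar> + ln 2) / lam j0"
    using lpos[of j0] by (intro divide_nonneg_pos) auto
  ultimately show "Cst lam > 0" by linarith
next
  fix p q :: "real \<times> (real^'n)"
  note lpos = assms
  define T where "T = {t. t \<ge> 0 \<and> (\<Sum>i\<in>UNIV. exp (-2 * lam i * (t + max (fst p) (fst q))) * ((snd p) $ i - (snd q) $ i)\<^sup>2) \<le> 1}"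
  define SL where "SL = {L. \<exists>\<gamma>. \<gamma> 0 = p \<and> \<gamma> 1 = q \<and> has_riem_length lam \<gamma> L}"
  have rd: "riem_dist lam p q = Inf SL" unfolding riem_dist_def SL_def ..
  have rh: "rho lam p q = 1 + \<bar>fst p - fst q\<bar> + 2 * Inf T" unfolding rho_def T_def ..
  obtain t0 where t0T: "t0 \<in> T" and low: "\<And>\<gamma> L. \<gamma> 0 = p \<Longrightarrow> \<gamma> 1 = q \<Longrightarrow> has_riem_length lam \<gamma> L \<Longrightarrow> rho lam p q \<le> L + Cst lam"
    using key[where lam=lam and p=p and q=q, OF lpos] unfolding T_def by blast
  have up: "\<exists>L\<in>SL. L \<le> 1 + \<bar>fst p - fst q\<bar> + 2 * t" if "t \<in> T" for t
    using curve_upper[of t lam p q] that unfolding T_def SL_def by blast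
  have lowL: "rho lam p q - Cst lam \<le> L" if "L \<in> SL" for L
    using that low unfolding SL_def by force
  have ne: "SL \<noteq> {}" using up[OF t0T] by blast
  have bdd: "bdd_below SL" using lowL by (intro bdd_belowI) 
  have "rho lam p q - Cst lam \<le> Inf SL" using ne lowL by (rule cInf_greatest)
  then show "rho lam p q \<le> riem_dist lam p q + Cst lam" unfolding rd by linarith
  have "(Inf SL - 1 - \<bar>fst p - fst q\<bar>) / 2 \<le> t" if tT: "t \<in> T" for t
  proof -
    obtain L where L: "L \<in> SL" "L \<le> 1 + \<bar>fst p - fst q\<bar> + 2 * t" using up[OF tT] by blast
    have "Inf SL \<le> L" by (rule cInf_lower[OF L(1) bdd])
    then have "Inf SL - 1 - \<bar>fst p - fst q\<bar> \<le> 2 * t" using L(2) by linarith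
    then show ?thesis by (simp add: divide_le_eq mult.commute)
  qed
  then have "(Inf SL - 1 - \<bar>fst p - fst q\<bar>) / 2 \<le> Inf T"
    using t0T by (intro cInf_greatest) auto
  then have "Inf SL - 1 - \<bar>fst p - fst q\<bar> \<le> 2 * Inf T" by (simp add: divide_le_eq mult.commute)
  then show "riem_dist lam p q \<le> rho lam p q" unfolding rd rh by linarith
qed

end
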